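(* Let $G=(V,E)$ be a finite, simple, undirected, connected graph and let $\ell\geq 1$ be an integer. A vertex $v\in V$ is a forced vertex of an $\ell$-solid-resolving set of $G$ (i.e., $v$ belongs to every $\ell$-solid-resolving set of $G$) if and only if there exists a set $U\subseteq V$ with $v\notin U$, $|U|\leq\ell$ and $N(v)\subseteq N[U]$.
   Context: $N(v)=\{u\in V: d(v,u)=1\}$ is the open neighbourhood, $N[v]=N(v)\cup\{v\}$, and $N[U]=\bigcup_{u\in U}N[u]$. $d$ is the shortest-path distance; for nonempty $X\subseteq V$, $d(s,X)=\min_{x\in X}d(s,x)$; for $S=\{s_1,\dots,s_k\}$, $\mathcal{D}_S(X)=(d(s_1,X),\dots,d(s_k,X))$. $S\subseteq V$ is an $\ell$-solid-resolving set if $\mathcal{D}_S(X)\neq\mathcal{D}_S(Y)$ for all distinct nonempty $X,Y\subseteq V$ with $|X|\leq\ell$ ($Y$ of arbitrary size). A vertex is forced if no subset of $V\setminus\{v\}$ is an $\ell$-solid-resolving set. *)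

theory Defs
  imports Main
begin

definition simple_graph :: "'a set \<Rightarrow> ('a \<Rightarrow> 'a \<Rightarrow> bool) \<Rightarrow> bool" where
  "simple_graph V E \<longleftrightarrow> finite V \<and> (\<forall>x y. E x y \<longrightarrow> x \<in> V \<and> y \<in> V)
     \<and> (\<forall>x y. E x y \<longrightarrow> E y x) \<and> (\<forall>x. \<not> E x x)"

inductive walk :: "('a \<Rightarrow> 'a \<Rightarrow> bool) \<Rightarrow> nat \<Rightarrow> 'a \<Rightarrow> 'a \<Rightarrow> bool" for E where
  walk0: "walk E 0 x x"
| walkS: "E x y \<Longrightarrow> walk E n y z \<Longrightarrow> walk E (Suc n) x z"

definition connected_graph :: "'a set \<Rightarrow> ('a \<Rightarrow> 'a \<Rightarrow> bool) \<Rightarrow> bool" where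
  "connected_graph V E \<longleftrightarrow> V \<noteq> {} \<and> (\<forall>x\<in>V. \<forall>y\<in>V. \<exists>n. walk E n x y)"

definition dist :: "('a \<Rightarrow> 'a \<Rightarrow> bool) \<Rightarrow> 'a \<Rightarrow> 'a \<Rightarrow> nat" where
  "dist E x y = (LEAST n. walk E n x y)"

definition set_dist :: "('a \<Rightarrow> 'a \<Rightarrow> bool) \<Rightarrow> 'a \<Rightarrow> 'a set \<Rightarrow> nat" where
  "set_dist E s X = Min (dist E s ` X)"

definition open_nbhd :: "'a set \<Rightarrow> ('a \<Rightarrow> 'a \<Rightarrow> bool) \<Rightarrow> 'a \<Rightarrow> 'a set" where
  "open_nbhd V E v = {u \<in> V. dist E v u = 1}"

definition closed_nbhd :: "'a set \<Rightarrow> ('a \<Rightarrow> 'a \<Rightarrow> bool) \<Rightarrow> 'a \<Rightarrow> 'a set" where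
  "closed_nbhd V E v = open_nbhd V E v \<union> {v}"

definition closed_nbhd_set :: "'a set \<Rightarrow> ('a \<Rightarrow> 'a \<Rightarrow> bool) \<Rightarrow> 'a set \<Rightarrow> 'a set" where
  "closed_nbhd_set V E U = (\<Union>u\<in>U. closed_nbhd V E u)"

text \<open>S is l-solid-resolving: D_S(X) \<noteq> D_S(Y) for all distinct nonempty X, Y \<subseteq> V with |X| \<le> l;
  equality of distance vectors means equality in every coordinate s \<in> S.\<close>
definition solid_resolving :: "'a set \<Rightarrow> ('a \<Rightarrow> 'a \<Rightarrow> bool) \<Rightarrow> nat \<Rightarrow> 'a set \<Rightarrow> bool" where
  "solid_resolving V E l S \<longleftrightarrow> S \<subseteq> V \<and>
     (\<forall>X Y. X \<subseteq> V \<longrightarrow> Y \<subseteq> V \<longrightarrow> X \<noteq> {} \<longrightarrow> Y \<noteq> {} \<longrightarrow> X \<noteq> Y \<longrightarrow> card X \<le> l \<longrightarrow>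
        (\<exists>s\<in>S. set_dist E s X \<noteq> set_dist E s Y))"

definition forced_vertex :: "'a set \<Rightarrow> ('a \<Rightarrow> 'a \<Rightarrow> bool) \<Rightarrow> nat \<Rightarrow> 'a \<Rightarrow> bool" where
  "forced_vertex V E l v \<longleftrightarrow> v \<in> V \<and> \<not> (\<exists>S. S \<subseteq> V - {v} \<and> solid_resolving V E l S)"

end

theory Submission
  imports Defs
begin

lemma walk_append: "walk E n x y \<Longrightarrow> walk E m y z \<Longrightarrow> walk E (n+m) x z"
  by (induction rule: walk.induct) (auto intro: walk.intros)

lemma walk_snoc: "walk E n x y \<Longrightarrow> E y z \<Longrightarrow> walk E (Suc n) x z"
  using walk_append[of E n x y 1 z] by (auto intro: walk.intros)

lemma walk_rev:
  assumes sym: "\<And>x y. E x y \<Longrightarrow> E y x"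
  shows "walk E n x y \<Longrightarrow> walk E n y x"
  by (induction rule: walk.induct) (auto intro: walk.intros walk_snoc sym)

lemma walk_one: "walk E 1 x y \<longleftrightarrow> E x y"
proof
  assume "walk E 1 x y" then show "E x y"
    by (cases rule: walk.cases) (auto elim: walk.cases)
next
  assume "E x y" then show "walk E 1 x y" using walkS[OF _ walk0] by fastforce
qed

lemma walk_zero: "walk E 0 x y \<longleftrightarrow> x = y"
  by (auto elim: walk.cases intro: walk.intros)

locale G =
  fixes V :: "'a set" and E :: "'a \<Rightarrow> 'a \<Rightarrow> bool"
  assumes sg: "simple_graph V E" and cg: "connected_graph V E"
begin

lemma sym: "E x y \<Longrightarrow> E y x" using sg unfolding simple_graph_def by blast
lemma irr: "\<not> E x x" using sg unfolding simple_graph_def by blast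
lemma inV: "E x y \<Longrightarrow> x \<in> V \<and> y \<in> V" using sg unfolding simple_graph_def by blast
lemma finV: "finite V" using sg unfolding simple_graph_def by blast

lemma ex_walk: "x \<in> V \<Longrightarrow> y \<in> V \<Longrightarrow> \<exists>n. walk E n x y"
  using cg unfolding connected_graph_def by blast

lemma dist_walk: "x \<in> V \<Longrightarrow> y \<in> V \<Longrightarrow> walk E (dist E x y) x y"
  unfolding dist_def using ex_walk by (meson LeastI)

lemma dist_le: "walk E n x y \<Longrightarrow> dist E x y \<le> n"
  unfolding dist_def by (rule Least_le)

lemma dist_sym: "x \<in> V \<Longrightarrow> y \<in> V \<Longrightarrow> dist E x y = dist E y x"
  by (meson antisym dist_le dist_walk walk_rev sym)

lemma dist_tri: "x \<in> V \<Longrightarrow> y \<in> V \<Longrightarrow> z \<in> V \<Longrightarrow> dist E x z \<le> dist E x y + dist E y z"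
  by (meson dist_le dist_walk walk_append)

lemma dist_zero: "x \<in> V \<Longrightarrow> y \<in> V \<Longrightarrow> dist E x y = 0 \<longleftrightarrow> x = y"
  by (metis dist_walk dist_le le_zero_eq walk0 walk_zero)

lemma dist_one: "x \<in> V \<Longrightarrow> y \<in> V \<Longrightarrow> dist E x y = 1 \<longleftrightarrow> E x y"
proof
  assume "x \<in> V" "y \<in> V" "dist E x y = 1"
  then show "E x y" using dist_walk walk_one by metis
next
  assume a: "x \<in> V" "y \<in> V" "E x y"
  then have "dist E x y \<le> 1" using dist_le walk_one by metis
  moreover have "x \<noteq> y" using a irr by blast
  ultimately show "dist E x y = 1" using dist_zero a by fastforce
qed

lemma nbr_path:
  assumes "s \<in> V" "v \<in> V" "s \<noteq> v"
  shows "\<exists>w. E v w \<and> dist E s w + 1 \<le> dist E s v"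
proof -
  have wk: "walk E (dist E v s) v s" using dist_walk assms by blast
  have "dist E v s \<noteq> 0" using dist_zero assms by blast
  then obtain d where d: "dist E v s = Suc d" by (cases "dist E v s") auto
  from wk[unfolded d] obtain w where w: "E v w" "walk E d w s"
    by (cases rule: walk.cases) auto
  have "w \<in> V" using inV w by blast
  have "dist E w s \<le> d" using dist_le w by blast
  then show ?thesis using w d dist_sym assms \<open>w \<in> V\<close> by (metis Suc_eq_plus1 Suc_le_mono)
qed

lemma set_dist_le: "finite X \<Longrightarrow> u \<in> X \<Longrightarrow> set_dist E s X \<le> dist E s u"
  unfolding set_dist_def by simp

lemma set_dist_in: "finite X \<Longrightarrow> X \<noteq> {} \<Longrightarrow> \<exists>u\<in>X. set_dist E s X = dist E s u"
  unfolding set_dist_def using Min_in[of "dist E s ` X"] by fastforce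

lemma set_dist_insert: "finite X \<Longrightarrow> X \<noteq> {} \<Longrightarrow>
   set_dist E s (insert v X) = min (dist E s v) (set_dist E s X)"
  unfolding set_dist_def by simp

lemma set_dist_zero: "X \<subseteq> V \<Longrightarrow> X \<noteq> {} \<Longrightarrow> s \<in> V \<Longrightarrow> set_dist E s X = 0 \<longleftrightarrow> s \<in> X"
proof -
  assume a: "X \<subseteq> V" "X \<noteq> {}" "s \<in> V"
  have f: "finite X" using a finV finite_subset by blast
  show ?thesis
  proof
    assume "set_dist E s X = 0"
    then obtain u where "u \<in> X" "dist E s u = 0" using set_dist_in[OF f a(2)] by metis
    then show "s \<in> X" using dist_zero a by blast
  next
    assume "s \<in> X"
    then show "set_dist E s X = 0" using set_dist_le[OF f, of s s] dist_zero a by force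
  qed
qed

lemma key:
  assumes Z: "Z \<subseteq> V" "Z \<noteq> {}" "v \<notin> Z" "v \<in> V"
    and eq: "\<forall>s\<in>V-{v}. set_dist E s Z = set_dist E s (insert v Z)"
  shows "open_nbhd V E v \<subseteq> closed_nbhd_set V E Z"
proof
  fix w assume "w \<in> open_nbhd V E v"
  then have w: "w \<in> V" "dist E v w = 1" unfolding open_nbhd_def by auto
  have f: "finite Z" using Z finV finite_subset by blast
  have "w \<noteq> v" using w dist_zero Z by force
  have "set_dist E w (insert v Z) \<le> 1"
    using set_dist_le[of "insert v Z" v w] f w dist_sym Z by simp
  then have "set_dist E w Z \<le> 1" using eq w \<open>w \<noteq> v\<close> by simp
  then obtain u where u: "u \<in> Z" "dist E w u \<le> 1" using set_dist_in[OF f Z(2)] by metis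
  have uV: "u \<in> V" using u Z by blast
  show "w \<in> closed_nbhd_set V E Z"
  proof (cases "dist E w u = 0")
    case True
    then have "u = w" using dist_zero w uV by blast
    then show ?thesis using u unfolding closed_nbhd_set_def closed_nbhd_def by blast
  next
    case False
    then have "dist E u w = 1" using u dist_sym w uV by simp
    then show ?thesis using u w unfolding closed_nbhd_set_def closed_nbhd_def open_nbhd_def by blast
  qed
qed

end

theorem mainTheorem4:
  fixes V :: "'a set" and E :: "'a \<Rightarrow> 'a \<Rightarrow> bool" and l :: nat and v :: 'a
  assumes "simple_graph V E" and "connected_graph V E" and "card V \<ge> 2"
    and "l \<ge> 1" and "v \<in> V"
  shows "forced_vertex V E l v \<longleftrightarrow>
    (\<exists>U. U \<subseteq> V \<and> v \<notin> U \<and> card U \<le> l \<and> open_nbhd V E v \<subseteq> closed_nbhd_set V E U)"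
proof -
  interpret G V E using assms by unfold_locales
  show ?thesis
  proof
    assume fv: "forced_vertex V E l v"
    show "\<exists>U. U \<subseteq> V \<and> v \<notin> U \<and> card U \<le> l \<and> open_nbhd V E v \<subseteq> closed_nbhd_set V E U"
    proof (rule ccontr)
      assume nU: "\<not> ?thesis"
      have "solid_resolving V E l (V - {v})"
        unfolding solid_resolving_def
      proof (intro conjI allI impI)
        fix X Y assume XY: "X \<subseteq> V" "Y \<subseteq> V" "X \<noteq> {}" "Y \<noteq> {}" "X \<noteq> Y" "card X \<le> l"
        show "\<exists>s\<in>V - {v}. set_dist E s X \<noteq> set_dist E s Y"
        proof (rule ccontr)
          assume "\<not> ?thesis"
          then have eq: "\<forall>s\<in>V-{v}. set_dist E s X = set_dist E s Y" by blast
          have fX: "finite X" "finite Y" using XY finV finite_subset by auto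
          have "X - {v} = Y - {v}"
          proof (intro set_eqI iffI)
            fix s assume "s \<in> X - {v}"
            then have "set_dist E s X = 0" "s \<in> V - {v}" using set_dist_zero[of X s] XY by auto
            then show "s \<in> Y - {v}" using eq set_dist_zero[of Y s] XY by auto
          next
            fix s assume "s \<in> Y - {v}"
            then have "set_dist E s Y = 0" "s \<in> V - {v}" using set_dist_zero[of Y s] XY by auto
            then show "s \<in> X - {v}" using eq set_dist_zero[of X s] XY by auto
          qed
          then consider "v \<in> Y" "v \<notin> X" "Y = insert v X" | "v \<in> X" "v \<notin> Y" "X = insert v Y"
            using XY(5) by blast
          then show False
          proof cases
            case 1
            then have "open_nbhd V E v \<subseteq> closed_nbhd_set V E X"
              using key[of X v] XY eq assms(5) 1 by simp
            then show False using nU XY 1 by blast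
          next
            case 2
            then have "open_nbhd V E v \<subseteq> closed_nbhd_set V E Y"
              using key[of Y v] XY eq assms(5) 2 by simp
            moreover have "card Y \<le> l" using XY(6) 2 fX card_insert_disjoint[of Y v] by simp
            ultimately show False using nU XY 2 by blast
          qed
        qed
      qed auto
      then show False using fv unfolding forced_vertex_def by blast
    qed
  next
    assume "\<exists>U. U \<subseteq> V \<and> v \<notin> U \<and> card U \<le> l \<and> open_nbhd V E v \<subseteq> closed_nbhd_set V E U"
    then obtain U where U: "U \<subseteq> V" "v \<notin> U" "card U \<le> l" "open_nbhd V E v \<subseteq> closed_nbhd_set V E U"
      by blast
    have fU: "finite U" using U finV finite_subset by blast
    obtain x where x: "x \<in> V" "x \<noteq> v"
    proof -
      have "V \<noteq> {v}" using assms(3) by auto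
      then show ?thesis using that assms(5) by blast
    qed
    obtain w where "E v w" using nbr_path[OF x(1) assms(5) x(2)] by blast
    then have "w \<in> open_nbhd V E v" using dist_one inV unfolding open_nbhd_def by blast
    then have Une: "U \<noteq> {}" using U unfolding closed_nbhd_set_def by blast
    show "forced_vertex V E l v"
      unfolding forced_vertex_def
    proof (intro conjI notI)
      show "v \<in> V" by fact
    next
      assume "\<exists>S. S \<subseteq> V - {v} \<and> solid_resolving V E l S"
      then obtain S where S: "S \<subseteq> V - {v}" "solid_resolving V E l S" by blast
      have "insert v U \<subseteq> V" using U assms(5) by blast
      moreover have "U \<noteq> insert v U" using U by blast
      ultimately obtain s where s: "s \<in> S" "set_dist E s U \<noteq> set_dist E s (insert v U)"
      proof -
        have "\<forall>X Y. X \<subseteq> V \<longrightarrow> Y \<subseteq> V \<longrightarrow> X \<noteq> {} \<longrightarrow> Y \<noteq> {} \<longrightarrow> X \<noteq> Y \<longrightarrow> card X \<le> l \<longrightarrow>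
          (\<exists>s\<in>S. set_dist E s X \<noteq> set_dist E s Y)" using S(2) unfolding solid_resolving_def by (elim conjE)
        then have "\<exists>s\<in>S. set_dist E s U \<noteq> set_dist E s (insert v U)"
          using \<open>insert v U \<subseteq> V\<close> \<open>U \<noteq> insert v U\<close> U(1,3) Une by simp
        then show ?thesis using that by blast
      qed
      have sV: "s \<in> V" "s \<noteq> v" using s S by auto
      obtain w where w: "E v w" "dist E s w + 1 \<le> dist E s v" using nbr_path[OF sV(1) assms(5) sV(2)] by blast
      have wV: "w \<in> V" using w inV by blast
      then have "w \<in> open_nbhd V E v" using dist_one inV w unfolding open_nbhd_def by blast
      then obtain u where u: "u \<in> U" "w = u \<or> dist E u w = 1"
        using U unfolding closed_nbhd_set_def closed_nbhd_def open_nbhd_def by blast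
      have uV: "u \<in> V" using u U by blast
      have "dist E s u \<le> dist E s w + dist E w u" using dist_tri sV wV uV by blast
      moreover have "dist E w u \<le> 1"
      proof (cases "w = u")
        case True then show ?thesis using dist_zero[OF uV uV] by simp
      next
        case False then have "dist E u w = 1" using u by blast
        then show ?thesis using dist_sym[OF wV uV] by simp
      qed
      ultimately have "set_dist E s U \<le> dist E s v"
        using set_dist_le[OF fU u(1), of s] w by linarith
      then show False using s set_dist_insert[OF fU Une] by simp
    qed
  qed
qed

end
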